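(* Let $\sum_{n=1}^{\infty}x_n$ be a conditionally convergent series of reals and $I$ an ideal on $\mathbb{N}$ containing $\mathrm{Fin}$. Write $x^{+}=\max\{x,0\}$, $x^{-}=\max\{-x,0\}$. Then: (1) $SR_I(x_n)=\{\sum_{n=1}^{\infty}x_n\}$ if and only if $\sum_{n\in A}|x_n|<\infty$ for every $A\in I$; (2) if there exists $A\in I$ with $\sum_{n\in A}x_n^{+}=\sum_{n\in A}x_n^{-}=\infty$, then $SR_I(x_n)=\mathbb{R}$; (3) if there exists $A\in I$ with $\sum_{n\in A}x_n^{+}=\infty$, and every $A\in I$ with $\sum_{n\in A}x_n^{+}=\infty$ satisfies $\sum_{n\in A}x_n^{-}<\infty$, then $SR_I(x_n)\supseteq(-\infty,\sum_{n=1}^{\infty}x_n]$; (4) if there exists $B\in I$ with $\sum_{n\in B}x_n^{-}=\infty$, and every $B\in I$ with $\sum_{n\in B}x_n^{-}=\infty$ satisfies $\sum_{n\in B}x_n^{+}<\infty$, then $SR_I(x_n)\supseteq[\sum_{n=1}^{\infty}x_n,\infty)$. Moreover, for every conditionally convergent series exactly one of the four hypotheses (the condition in (1), and the hypotheses of (2), (3), (4)) holds.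
   Context: An ideal on $\mathbb{N}$ is a family $I\subseteq P(\mathbb{N})$ closed under finite unions and subsets with $\mathbb{N}\notin I$; $\mathrm{Fin}$ is the ideal of finite sets. $S_\infty$ is the set of permutations of $\mathbb{N}$, and for $\sigma\in S_\infty$, $\mathrm{supp}(\sigma)=\{n:\sigma(n)\neq n\}$. The ideally supported sum range is $SR_I(x_n)=\{\sum_{n=1}^{\infty}x_{\sigma(n)} : \sigma\in S_\infty,\ \mathrm{supp}(\sigma)\in I,\ \sum_{n}x_{\sigma(n)}\text{ converges}\}$. *)

theory Defs
  imports "HOL-Analysis.Analysis"
begin

definition ideal_on_nat :: "nat set set \<Rightarrow> bool" where
  "ideal_on_nat I \<longleftrightarrow>
     (\<forall>A\<in>I. \<forall>B\<in>I. A \<union> B \<in> I) \<and>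
     (\<forall>A\<in>I. \<forall>B. B \<subseteq> A \<longrightarrow> B \<in> I) \<and>
     UNIV \<notin> I"

definition supp :: "(nat \<Rightarrow> nat) \<Rightarrow> nat set" where
  "supp \<sigma> = {n. \<sigma> n \<noteq> n}"

definition SR :: "nat set set \<Rightarrow> (nat \<Rightarrow> real) \<Rightarrow> real set" where
  "SR I x = {s. \<exists>\<sigma>. bij \<sigma> \<and> supp \<sigma> \<in> I \<and> (\<lambda>n. x (\<sigma> n)) sums s}"

definition conditionally_convergent :: "(nat \<Rightarrow> real) \<Rightarrow> bool" where
  "conditionally_convergent x \<longleftrightarrow> summable x \<and> \<not> summable (\<lambda>n. \<bar>x n\<bar>)"

definition pos_part :: "real \<Rightarrow> real" where "pos_part t = max t 0"
definition neg_part :: "real \<Rightarrow> real" where "neg_part t = max (- t) 0"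

end

theory Submission
  imports Defs
begin


lemma rank_surj:
  fixes D :: "nat set"
  assumes "infinite D"
  shows "\<exists>n\<in>D. card (D \<inter> {..<n}) = k"
proof -
  obtain F where F: "F \<subseteq> D" "finite F" "card F = Suc k"
    using infinite_arbitrarily_large[OF assms] by blast
  define N where "N = Suc (Max F)"
  have "F \<subseteq> D \<inter> {..<N}" using F by (auto simp: N_def le_imp_less_Suc)
  then have "card (D \<inter> {..<N}) > k" using card_mono[of "D \<inter> {..<N}" F] F by simp
  then have ex: "\<exists>n. card (D \<inter> {..<n}) > k" by blast
  define n0 where "n0 = (LEAST n. card (D \<inter> {..<n}) > k)"
  have n0: "card (D \<inter> {..<n0}) > k" using LeastI_ex[OF ex] by (simp add: n0_def)
  have "n0 \<noteq> 0"
  proof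
    assume "n0 = 0" then show False using n0 by simp
  qed
  then obtain n where n: "n0 = Suc n" using not0_implies_Suc by blast
  have c1: "\<not> card (D \<inter> {..<n}) > k" using not_less_Least[of n "\<lambda>n. card (D \<inter> {..<n}) > k"] n
    by (simp add: n0_def)
  have c2: "D \<inter> {..<Suc n} = (if n \<in> D then insert n (D \<inter> {..<n}) else D \<inter> {..<n})"
    by (auto simp: less_Suc_eq)
  show ?thesis
  proof (cases "n \<in> D")
    case True
    then have "card (D \<inter> {..<n}) = k" using c1 c2 n0 n by auto
    then show ?thesis using True by blast
  next
    case False
    then show ?thesis using c1 c2 n0 n by auto
  qed
qed

lemma rank_mono:
  fixes D :: "nat set"
  assumes "a \<in> D" "a < b"
  shows "card (D \<inter> {..<a}) < card (D \<inter> {..<b})"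
  by (rule psubset_card_mono) (use assms in auto)

lemma sum_rank:
  fixes D :: "nat set" and g :: "nat \<Rightarrow> real"
  shows "(\<Sum>n<N. if n \<in> D then g (card (D \<inter> {..<n})) else 0) = (\<Sum>k<card (D \<inter> {..<N}). g k)"
proof (induction N)
  case (Suc N)
  have "D \<inter> {..<Suc N} = (if N \<in> D then insert N (D \<inter> {..<N}) else D \<inter> {..<N})"
    by (auto simp: less_Suc_eq)
  then show ?case using Suc by (cases "N \<in> D") auto
qed simp

lemma rank_tendsto:
  fixes D :: "nat set"
  assumes "infinite D"
  shows "filterlim (\<lambda>N. card (D \<inter> {..<N})) at_top sequentially"
unfolding filterlim_at_top
proof
  fix Z
  obtain n where n: "n \<in> D" "card (D \<inter> {..<n}) = Z" using rank_surj[OF assms] by blast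
  have "Z \<le> card (D \<inter> {..<N})" if "N \<ge> n" for N
    unfolding n(2)[symmetric] by (rule card_mono) (use that in auto)
  then show "\<forall>\<^sub>F N in sequentially. Z \<le> card (D \<inter> {..<N})"
    by (rule eventually_sequentiallyI)
qed

context
  fixes x :: "nat \<Rightarrow> real" and P :: "nat set" and c :: real and t :: "nat \<Rightarrow> nat"
  assumes xlim: "x \<longlonglongrightarrow> 0"
  and Ppos: "\<And>n. n \<in> P \<Longrightarrow> x n > 0"
  and Pdiv: "\<not> x summable_on (P - range t)"
  and tmono: "strict_mono t" and tP: "range t \<subseteq> P"
  and cpos: "c > 0"
  and xs: "summable x" and tsum: "summable (\<lambda>k. x (t k))"
begin

primrec Hs :: "nat \<Rightarrow> nat set" where
  "Hs 0 = {}"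
| "Hs (Suc n) = (if n \<in> range t then (if sum x (Hs n) > c then Hs n - {Min (Hs n)} else Hs n)
     else if n \<in> P \<and> sum x (Hs n) \<le> c then insert n (Hs n) else Hs n)"

definition "rel n \<longleftrightarrow> n \<in> range t \<and> c < sum x (Hs n)"
definition "join n \<longleftrightarrow> n \<in> P \<and> n \<notin> range t \<and> sum x (Hs n) \<le> c"

lemma Hs_Suc_cases:
  "(rel n \<and> Hs (Suc n) = Hs n - {Min (Hs n)}) \<or> (join n \<and> Hs (Suc n) = insert n (Hs n))
   \<or> (\<not> rel n \<and> \<not> join n \<and> Hs (Suc n) = Hs n)"
  by (auto simp: rel_def join_def)

lemma Hs_fin: "finite (Hs n)"
  by (induction n) auto

lemma Hs_lt: "Hs n \<subseteq> {..<n}"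
  by (induction n) (auto dest: subsetD[OF Diff_subset])

lemma Hs_join: "Hs n \<subseteq> {m. join m}"
proof (induction n)
  case 0 then show ?case by simp
next
  case (Suc n) then show ?case using Hs_Suc_cases[of n] by auto
qed

lemma Hs_P: "m \<in> Hs n \<Longrightarrow> m \<in> P"
  using Hs_join join_def by blast

lemma h_nonneg: "sum x (Hs n) \<ge> 0"
  by (rule sum_nonneg) (use Hs_P Ppos in \<open>force\<close>)

lemma rel_ne: "rel n \<Longrightarrow> Hs n \<noteq> {}"
  using cpos by (auto simp: rel_def)

lemma Hs_old: "n \<le> n' \<Longrightarrow> Hs n' \<inter> {..<n} \<subseteq> Hs n"
proof (induction n' rule: dec_induct)
  case base then show ?case by simp
next
  case (step n')
  have "Hs (Suc n') \<subseteq> insert n' (Hs n')" using Hs_Suc_cases[of n'] by auto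
  then show ?case using step by auto
qed

lemma h_Suc: "sum x (Hs (Suc n)) = (if rel n then sum x (Hs n) - x (Min (Hs n))
     else if join n then sum x (Hs n) + x n else sum x (Hs n))"
proof -
  consider "rel n" "Hs (Suc n) = Hs n - {Min (Hs n)}" | "join n" "Hs (Suc n) = insert n (Hs n)"
    | "\<not> rel n" "\<not> join n" "Hs (Suc n) = Hs n" using Hs_Suc_cases[of n] by blast
  then show ?thesis
  proof cases
    case 1
    have "Min (Hs n) \<in> Hs n" using rel_ne[OF 1(1)] Hs_fin by auto
    then show ?thesis using 1 Hs_fin by (simp add: sum_diff1)
  next
    case 2
    have "\<not> rel n" using 2(1) by (auto simp: rel_def join_def)
    moreover have "n \<notin> Hs n" using Hs_lt by auto
    ultimately show ?thesis using 2 Hs_fin by simp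
  qed simp
qed

lemma t_ge: "k \<le> t k"
  using tmono by (simp add: strict_mono_imp_increasing)

lemma PT_infinite: "infinite (P - range t)"
  using Pdiv summable_on_finite by blast

lemma PT_div: "\<exists>n\<ge>N. sum x ((P - range t) \<inter> {N..<n}) > B"
proof (rule ccontr)
  assume "\<not> ?thesis"
  then have le: "\<And>n. n \<ge> N \<Longrightarrow> sum x ((P - range t) \<inter> {N..<n}) \<le> B" by (simp add: not_less)
  let ?S = "P - range t"
  have "x summable_on ?S"
  proof (rule nonneg_bdd_above_summable_on)
    show "\<And>y. y \<in> ?S \<Longrightarrow> 0 \<le> x y" using Ppos by (simp add: less_imp_le)
    show "bdd_above (sum x ` {F. F \<subseteq> ?S \<and> finite F})"
    proof (rule bdd_aboveI2)
      fix F assume F: "F \<in> {F. F \<subseteq> ?S \<and> finite F}"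
      define M where "M = max N (Suc (Max (insert 0 F)))"
      have "F \<subseteq> ?S \<inter> {..<M}"
      proof
        fix y assume y: "y \<in> F"
        have "y \<le> Max (insert 0 F)" using F y by auto
        then have "y < M" by (simp add: M_def)
        then show "y \<in> ?S \<inter> {..<M}" using F y by auto
      qed
      then have "sum x F \<le> sum x (?S \<inter> {..<M})"
        by (intro sum_mono2) (use Ppos in \<open>auto intro: less_imp_le\<close>)
      also have "?S \<inter> {..<M} = (?S \<inter> {..<N}) \<union> (?S \<inter> {N..<M})"
        by (auto simp: M_def)
      also have "sum x \<dots> = sum x (?S \<inter> {..<N}) + sum x (?S \<inter> {N..<M})"
        by (rule sum.union_disjoint) auto
      also have "\<dots> \<le> sum x (?S \<inter> {..<N}) + B"
        using le[of M] by (simp add: M_def)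
      finally show "sum x F \<le> sum x (?S \<inter> {..<N}) + B" .
    qed
  qed
  then show False using Pdiv by simp
qed

abbreviation "h n \<equiv> sum x (Hs n)"

lemma D1: "\<exists>n\<ge>N. rel n"
proof (rule ccontr)
  assume "\<not> ?thesis"
  then have nr: "\<And>n. n \<ge> N \<Longrightarrow> \<not> rel n" by auto
  have mono: "h n \<le> h (Suc n)" if "n \<ge> N" for n
    using nr[OF that] h_Suc[of n] Ppos[of n] by (auto simp: join_def)
  show False
  proof (cases "\<exists>n1\<ge>N. h n1 > c")
    case True
    then obtain n1 where n1: "n1 \<ge> N" "h n1 > c" by auto
    have "h n > c" if "n \<ge> n1" for n
      using that
    proof (induction n rule: dec_induct)
      case (step n) then show ?case using mono[of n] n1 by auto
    qed (use n1 in auto)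
    then have "rel (t n1)" using t_ge[of n1] by (auto simp: rel_def)
    then show False using nr[of "t n1"] t_ge[of n1] n1 by auto
  next
    case False
    then have lc: "\<And>n. n \<ge> N \<Longrightarrow> h n \<le> c" by (auto simp: not_less)
    have "h n \<ge> h N + sum x ((P - range t) \<inter> {N..<n})" if "n \<ge> N" for n
      using that
    proof (induction n rule: dec_induct)
      case (step n)
      have eq: "(P - range t) \<inter> {N..<Suc n} = (if n \<in> P - range t then insert n ((P - range t) \<inter> {N..<n}) else (P - range t) \<inter> {N..<n})"
        using step by (auto simp: less_Suc_eq)
      show ?case
      proof (cases "n \<in> P - range t")
        case True
        then have "join n" using lc[OF step(1)] by (auto simp: join_def)
        then have "h (Suc n) = h n + x n" using h_Suc[of n] nr[OF step(1)] by simp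
        then show ?thesis using step True by (simp add: eq Hs_fin)
      next
        case False
        then have "(P - range t) \<inter> {N..<Suc n} = (P - range t) \<inter> {N..<n}" using eq by presburger
        then show ?thesis using step mono[OF step(1)] by (simp del: Hs.simps)
      qed
    qed simp
    moreover obtain n where "n \<ge> N" "sum x ((P - range t) \<inter> {N..<n}) > c"
      using PT_div[of N c] by auto
    ultimately show False using lc[of n] h_nonneg[of N] by fastforce
  qed
qed

lemma D2: "\<exists>n\<ge>N. join n"
proof (rule ccontr)
  assume "\<not> ?thesis"
  then have nj: "\<And>n. n \<ge> N \<Longrightarrow> \<not> join n" by auto
  have anti: "h (Suc n) \<le> h n" if "n \<ge> N" for n
  proof -
    have "rel n \<Longrightarrow> x (Min (Hs n)) \<ge> 0"
      using rel_ne[of n] Hs_fin[of n] Hs_P Ppos by (meson Min_in less_imp_le)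
    then show ?thesis using nj[OF that] h_Suc[of n] by auto
  qed
  show False
  proof (cases "\<exists>n1\<ge>N. h n1 \<le> c")
    case True
    then obtain n1 where n1: "n1 \<ge> N" "h n1 \<le> c" by auto
    have lc: "h n \<le> c" if "n \<ge> n1" for n
      using that
    proof (induction n rule: dec_induct)
      case (step n) then show ?case using anti[of n] n1 by auto
    qed (use n1 in auto)
    obtain n where n: "n \<ge> n1" "n \<in> P - range t"
      using PT_infinite infinite_nat_iff_unbounded_le by blast
    then have "join n" using lc[of n] by (auto simp: join_def)
    then show False using nj[of n] n n1 by auto
  next
    case False
    then have gc: "\<And>n. n \<ge> N \<Longrightarrow> h n > c" by (meson not_le)
    have cnt: "card (Hs n) + card (range t \<inter> {N..<n}) \<le> card (Hs N)" if "n \<ge> N" for n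
      using that
    proof (induction n rule: dec_induct)
      case (step n)
      show ?case
      proof (cases "n \<in> range t")
        case True
        then have r: "rel n" using gc[OF step(1)] by (simp add: rel_def)
        then have "Hs (Suc n) = Hs n - {Min (Hs n)}" using Hs_Suc_cases[of n] by (auto simp: rel_def join_def)
        moreover have "Min (Hs n) \<in> Hs n" using rel_ne[OF r] Hs_fin by auto
        ultimately have "card (Hs (Suc n)) = card (Hs n) - 1" "card (Hs n) \<ge> 1"
          using Hs_fin[of n] by (auto simp: card_gt_0_iff Suc_le_eq)
        moreover have "range t \<inter> {N..<Suc n} = insert n (range t \<inter> {N..<n})"
          using True step(1) by auto
        ultimately show ?thesis using step by simp
      next
        case False
        then have "\<not> rel n" by (simp add: rel_def)
        then have "Hs (Suc n) = Hs n" using Hs_Suc_cases[of n] nj[OF step(1)] by auto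
        moreover have "range t \<inter> {N..<Suc n} = range t \<inter> {N..<n}"
          using False by (auto simp: less_Suc_eq)
        ultimately show ?thesis using step by simp
      qed
    qed simp
    define K where "K = card (Hs N)"
    have sub: "t ` {N..<N+K+1} \<subseteq> range t \<inter> {N..<t (N+K+1)}"
    proof
      fix y assume "y \<in> t ` {N..<N+K+1}"
      then obtain k where k: "k \<in> {N..<N+K+1}" "y = t k" by auto
      then have "N \<le> t k" using t_ge[of k] by auto
      moreover have "t k < t (N+K+1)" using k tmono by (auto simp: strict_mono_def)
      ultimately show "y \<in> range t \<inter> {N..<t (N+K+1)}" using k by auto
    qed
    have "card (t ` {N..<N+K+1}) = K + 1"
      using tmono by (subst card_image) (auto simp: strict_mono_imp_inj_on)
    then have "K + 1 \<le> card (range t \<inter> {N..<t (N+K+1)})"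
      using card_mono[OF _ sub] by simp
    moreover have "t (N+K+1) \<ge> N" using t_ge[of "N+K+1"] by simp
    ultimately show False using cnt[of "t (N+K+1)"] by (simp add: K_def)
  qed
qed

lemma Min_Hs: "m \<in> Hs n \<Longrightarrow> Hs n \<inter> {..<m} = {} \<Longrightarrow> Min (Hs n) = m"
  using Hs_fin[of n] by (intro Min_eqI) auto

lemma D4: "\<exists>N. \<forall>n\<ge>N. Hs n \<inter> {..<m} = {}"
proof (induction m)
  case 0 then show ?case by simp
next
  case (Suc m)
  then obtain N where N: "\<And>n. n \<ge> N \<Longrightarrow> Hs n \<inter> {..<m} = {}" by auto
  define N' where "N' = max N (Suc m)"
  have "\<exists>n\<ge>N'. m \<notin> Hs n"
  proof (rule ccontr)
    assume "\<not> ?thesis"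
    then have all: "\<And>n. n \<ge> N' \<Longrightarrow> m \<in> Hs n" by auto
    obtain n where n: "n \<ge> N'" "rel n" using D1 by blast
    have "Min (Hs n) = m" using Min_Hs[OF all[OF n(1)]] N[of n] n(1) by (simp add: N'_def)
    moreover have "Hs (Suc n) = Hs n - {Min (Hs n)}" using Hs_Suc_cases[of n] n(2)
      by (auto simp: rel_def join_def)
    ultimately have "m \<notin> Hs (Suc n)" by simp
    then show False using all[of "Suc n"] n(1) by simp
  qed
  then obtain n0 where n0: "n0 \<ge> N'" "m \<notin> Hs n0" by auto
  have "Hs n \<inter> {..<Suc m} = {}" if "n \<ge> n0" for n
  proof -
    have "m \<notin> Hs n"
    proof
      assume "m \<in> Hs n"
      then have "m \<in> Hs n \<inter> {..<n0}" using n0(1) by (auto simp: N'_def)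
      then show False using Hs_old[OF that] n0(2) by auto
    qed
    moreover have "Hs n \<inter> {..<m} = {}" using N[of n] that n0(1) by (simp add: N'_def)
    ultimately show ?thesis by (auto simp: less_Suc_eq)
  qed
  then show ?case by blast
qed

lemma D3: "h \<longlonglongrightarrow> c"
proof (rule LIMSEQ_I)
  fix r :: real assume r: "r > 0"
  define \<epsilon> where "\<epsilon> = r / 2"
  have e: "\<epsilon> > 0" using r by (simp add: \<epsilon>_def)
  obtain N0 where N0: "\<And>n. n \<ge> N0 \<Longrightarrow> norm (x n - 0) < \<epsilon>" using LIMSEQ_D[OF xlim e] by blast
  obtain N1 where N1: "\<And>n. n \<ge> N1 \<Longrightarrow> Hs n \<inter> {..<N0} = {}" using D4 by blast
  define N2 where "N2 = max N0 N1"
  have relstep: "h (Suc n) = h n - x (Min (Hs n)) \<and> 0 < x (Min (Hs n)) \<and> x (Min (Hs n)) < \<epsilon>"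
    if "n \<ge> N2" "rel n" for n
  proof -
    have mi: "Min (Hs n) \<in> Hs n" using rel_ne[OF that(2)] Hs_fin by auto
    then have "Min (Hs n) \<ge> N0" using N1[of n] that(1) by (auto simp: N2_def)
    then have "x (Min (Hs n)) < \<epsilon>" using N0 by fastforce
    then show ?thesis using h_Suc[of n] that(2) Ppos[OF Hs_P[OF mi]] by simp
  qed
  have joinstep: "h (Suc n) = h n + x n \<and> 0 < x n \<and> x n < \<epsilon> \<and> \<not> rel n"
    if "n \<ge> N2" "join n" for n
  proof -
    have nr: "\<not> rel n" using that(2) by (auto simp: rel_def join_def)
    have "x n < \<epsilon>" using N0[of n] that(1) by (auto simp: N2_def)
    then show ?thesis using h_Suc[of n] that(2) nr Ppos[of n] by (simp add: join_def)
  qed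
  have otherstep: "h (Suc n) = h n" if "\<not> rel n" "\<not> join n" for n
    using h_Suc[of n] that by simp
  have band: "\<bar>h n - c\<bar> \<le> \<epsilon>" if "n \<ge> m" "m \<ge> N2" "\<bar>h m - c\<bar> \<le> \<epsilon>" for n m
    using that(1)
  proof (induction n rule: dec_induct)
    case base then show ?case using that by simp
  next
    case (step n)
    have nN: "n \<ge> N2" using step(1) that(2) by simp
    show ?case
    proof (cases "rel n")
      case True
      then show ?thesis using relstep[OF nN True] step(3) by (auto simp: rel_def)
    next
      case False
      show ?thesis
      proof (cases "join n")
        case True
        then show ?thesis using joinstep[OF nN True] step(3) by (auto simp: join_def)
      qed (use otherstep[OF False] step(3) in auto)
    qed
  qed
  have "\<exists>m\<ge>N2. \<bar>h m - c\<bar> \<le> \<epsilon>"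
  proof (rule ccontr)
    assume "\<not> ?thesis"
    then have out: "\<And>m. m \<ge> N2 \<Longrightarrow> \<bar>h m - c\<bar> > \<epsilon>" by (meson not_le)
    show False
    proof (cases "h N2 < c - \<epsilon>")
      case True
      have below: "h n < c - \<epsilon>" if "n \<ge> N2" for n
        using that
      proof (induction n rule: dec_induct)
        case (step n)
        have nr: "\<not> rel n" using step(3) e by (auto simp: rel_def)
        have "h (Suc n) < c"
        proof (cases "join n")
          case True then show ?thesis using joinstep[OF step(1) True] step(3) by simp
        qed (use otherstep[OF nr] step(3) e in auto)
        then show ?case using out[of "Suc n"] step(1) by auto
      qed (use True in simp)
      obtain n where "n \<ge> N2" "rel n" using D1 by blast
      then show False using below[of n] e by (auto simp: rel_def)
    next
      case False
      then have "h N2 > c + \<epsilon>" using out[of N2] by auto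
      have above: "h n > c + \<epsilon>" if "n \<ge> N2" for n
        using that
      proof (induction n rule: dec_induct)
        case (step n)
        have nj: "\<not> join n" using step(3) e by (auto simp: join_def)
        have "h (Suc n) > c"
        proof (cases "rel n")
          case True then show ?thesis using relstep[OF step(1) True] step(3) by simp
        qed (use otherstep[OF _ nj] step(3) e in auto)
        then show ?case using out[of "Suc n"] step(1) by auto
      qed (use \<open>h N2 > c + \<epsilon>\<close> in simp)
      obtain n where "n \<ge> N2" "join n" using D2 by blast
      then show False using above[of n] e by (auto simp: join_def)
    qed
  qed
  then obtain m where m: "m \<ge> N2" "\<bar>h m - c\<bar> \<le> \<epsilon>" by auto
  have "norm (h n - c) < r" if "n \<ge> m" for n
    using band[OF that m] r by (simp add: \<epsilon>_def)
  then show "\<exists>no. \<forall>n\<ge>no. norm (h n - c) < r" by blast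
qed

definition "DT = {n. join n \<or> (n \<in> range t \<and> \<not> rel n)}"
definition "sg n = (if rel n then Min (Hs n) else if n \<in> DT then t (card (DT \<inter> {..<n})) else n)"

lemma DT_inf: "infinite DT"
proof -
  have "{n. join n} \<subseteq> DT" by (auto simp: DT_def)
  moreover have "infinite {n. join n}"
    using D2 by (simp add: infinite_nat_iff_unbounded_le)
  ultimately show ?thesis using finite_subset by blast
qed

lemma rel_notDT: "rel n \<Longrightarrow> n \<notin> DT"
  by (auto simp: DT_def rel_def join_def)

lemma DT_notrel: "n \<in> DT \<Longrightarrow> \<not> rel n"
  using rel_notDT by blast

lemma first_exit:
  fixes Q :: "nat \<Rightarrow> bool"
  assumes "Q a" "\<not> Q b" "a \<le> b"
  shows "\<exists>n. a \<le> n \<and> Q n \<and> \<not> Q (Suc n)"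
  using assms(3,2)
proof (induction b rule: dec_induct)
  case base then show ?case using assms(1) by simp
next
  case (step b)
  show ?case
  proof (cases "Q b")
    case True then show ?thesis using step by blast
  next
    case False then show ?thesis using step by blast
  qed
qed

lemma released: "join m \<Longrightarrow> \<exists>n. rel n \<and> Min (Hs n) = m"
proof -
  assume j: "join m"
  have m1: "m \<in> Hs (Suc m)" using Hs_Suc_cases[of m] j by (auto simp: rel_def join_def)
  obtain N where N: "\<And>n. n \<ge> N \<Longrightarrow> Hs n \<inter> {..<Suc m} = {}" using D4 by blast
  have m2: "m \<notin> Hs (max N (Suc m))" using N[of "max N (Suc m)"] by auto
  obtain n where n: "Suc m \<le> n" "m \<in> Hs n" "m \<notin> Hs (Suc n)"
    using first_exit[of "\<lambda>n. m \<in> Hs n", OF m1 m2] by auto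
  then show ?thesis using Hs_Suc_cases[of n] by auto
qed

lemma sg_inj: "inj sg"
proof (rule injI)
  fix a b assume eq: "sg a = sg b"
  have clsr: "sg n \<in> Hs n \<and> join (sg n)" if "rel n" for n
  proof -
    have "Min (Hs n) \<in> Hs n" using rel_ne[OF that] Hs_fin by auto
    then show ?thesis using that Hs_join by (auto simp: sg_def)
  qed
  have clsd: "sg n = t (card (DT \<inter> {..<n}))" if "n \<in> DT" for n
    using that DT_notrel[OF that] by (simp add: sg_def)
  have clsf: "sg n = n \<and> \<not> join n \<and> n \<notin> range t" if "\<not> rel n" "n \<notin> DT" for n
    using that by (auto simp: sg_def DT_def)
  have jt: "join n \<Longrightarrow> n \<notin> range t" for n by (simp add: join_def)
  have rr: False if "rel a" "rel b" "a < b" "sg a = sg b" for a b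
  proof -
    have ma: "Min (Hs a) \<in> Hs a" using rel_ne[OF that(1)] Hs_fin by auto
    have "Hs (Suc a) = Hs a - {Min (Hs a)}" using Hs_Suc_cases[of a] that(1)
      by (auto simp: rel_def join_def)
    then have "sg a \<notin> Hs (Suc a)" using that(1) by (simp add: sg_def)
    moreover have "sg a < Suc a" using ma Hs_lt[of a] that(1) by (auto simp: sg_def)
    moreover have "sg b \<in> Hs b" using clsr[OF that(2)] by simp
    ultimately show False using Hs_old[of "Suc a" b] that by auto
  qed
  have dd: False if "a \<in> DT" "b \<in> DT" "a < b" "sg a = sg b" for a b
  proof -
    have "card (DT \<inter> {..<a}) < card (DT \<inter> {..<b})" using rank_mono that by blast
    moreover have "t (card (DT \<inter> {..<a})) = t (card (DT \<inter> {..<b}))" using that clsd by simp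
    ultimately show False using strict_mono_less[OF tmono] by (metis less_irrefl)
  qed
  have key: False if e: "sg a = sg b" and ab: "a < b" for a b
  proof -
    consider "rel a" | "\<not> rel a" "a \<in> DT" | "\<not> rel a" "a \<notin> DT" by blast
    then show False
    proof cases
      case 1
      consider "rel b" | "\<not> rel b" "b \<in> DT" | "\<not> rel b" "b \<notin> DT" by blast
      then show False
      proof cases
        case 1 then show False using rr[OF \<open>rel a\<close> _ ab e] by simp
      next
        case 2 then show False using clsr[OF \<open>rel a\<close>] clsd[of b] jt e by auto
      next
        case 3 then show False using clsr[OF \<open>rel a\<close>] clsf[of b] e by auto
      qed
    next
      case 2
      consider "rel b" | "\<not> rel b" "b \<in> DT" | "\<not> rel b" "b \<notin> DT" by blast
      then show False
      proof cases
        case 1 then show False using clsr[of b] clsd[of a] jt e \<open>a \<in> DT\<close> by auto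
      next
        case 2 then show False using dd[OF \<open>a \<in> DT\<close> _ ab e] by simp
      next
        case 3 then show False using clsd[of a] clsf[of b] e \<open>a \<in> DT\<close> by auto
      qed
    next
      case 3
      consider "rel b" | "\<not> rel b" "b \<in> DT" | "\<not> rel b" "b \<notin> DT" by blast
      then show False
      proof cases
        case 1 then show False using clsr[of b] clsf[of a] e 3 by auto
      next
        case 2 then have "sg b \<in> range t" using clsd[of b] by simp
        then show False using clsf[of a] e 3 by auto
      next
        case 3 then show False using clsf[of b] clsf[of a] e \<open>\<not> rel a\<close> \<open>a \<notin> DT\<close> ab by auto
      qed
    qed
  qed
  show "a = b"
    using key[of a b] key[of b a] eq by (cases a b rule: linorder_cases) auto
qed

lemma sg_surj: "surj sg"
proof -
  have "y \<in> range sg" for y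
  proof (cases "join y")
    case True
    then obtain n where "rel n" "Min (Hs n) = y" using released by blast
    then show ?thesis by (metis rangeI sg_def)
  next
    case nj: False
    show ?thesis
    proof (cases "y \<in> range t")
      case True
      then obtain k where k: "y = t k" by auto
      obtain n where n: "n \<in> DT" "card (DT \<inter> {..<n}) = k" using rank_surj[OF DT_inf] by blast
      have "sg n = y" using n DT_notrel[OF n(1)] k by (simp add: sg_def)
      then show ?thesis by (metis rangeI)
    next
      case False
      then have "sg y = y" using nj by (auto simp: sg_def DT_def rel_def)
      then show ?thesis by (metis rangeI)
    qed
  qed
  then show ?thesis by auto
qed

lemma sg_bij: "bij sg"
  using sg_inj sg_surj by (simp add: bij_def)

lemma sg_supp: "supp sg \<subseteq> P"
proof
  fix n assume "n \<in> supp sg"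
  then have "sg n \<noteq> n" by (simp add: supp_def)
  then have "rel n \<or> n \<in> DT" by (auto simp: sg_def split: if_splits)
  then show "n \<in> P" using tP by (auto simp: rel_def DT_def join_def)
qed

lemma t_rank: "n \<in> range t \<Longrightarrow> t (card (range t \<inter> {..<n})) = n"
proof -
  assume "n \<in> range t"
  then obtain k where k: "n = t k" by auto
  have "range t \<inter> {..<t k} = t ` {..<k}"
    using strict_mono_less[OF tmono] by auto
  moreover have "card (t ` {..<k}) = k"
    using strict_mono_imp_inj_on[OF tmono] by (simp add: card_image inj_on_subset)
  ultimately show ?thesis using k by simp
qed

lemma step_id: "x (sg n) - x n = (h n - h (Suc n))
   + (if n \<in> DT then x (t (card (DT \<inter> {..<n}))) else 0)
   - (if n \<in> range t then x (t (card (range t \<inter> {..<n}))) else 0)"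
proof -
  consider "rel n" | "join n" | "\<not> rel n" "\<not> join n" by blast
  then show ?thesis
  proof cases
    case 1
    then have "n \<in> range t" "n \<notin> DT" using rel_notDT by (auto simp: rel_def)
    then show ?thesis using 1 h_Suc[of n] t_rank[of n] by (simp add: sg_def)
  next
    case 2
    then have "n \<notin> range t" "n \<in> DT" "\<not> rel n" by (auto simp: join_def DT_def rel_def)
    then show ?thesis using 2 h_Suc[of n] by (simp add: sg_def)
  next
    case 3
    have hh: "h (Suc n) = h n" using h_Suc[of n] 3 by simp
    show ?thesis
    proof (cases "n \<in> range t")
      case True
      then have "n \<in> DT" using 3 by (simp add: DT_def)
      then show ?thesis using True 3 hh t_rank[OF True] by (simp add: sg_def)
    next
      case False
      then have "n \<notin> DT" using 3 by (simp add: DT_def)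
      then show ?thesis using False 3 hh by (simp add: sg_def)
    qed
  qed
qed

lemma sg_sums: "(\<lambda>n. x (sg n)) sums (suminf x - c)"
proof -
  define A where "A N = (\<Sum>k<card (DT \<inter> {..<N}). x (t k))" for N
  define B where "B N = (\<Sum>k<card (range t \<inter> {..<N}). x (t k))" for N
  have eq: "(\<Sum>n<N. x (sg n)) = (\<Sum>n<N. x n) - h N + A N - B N" for N
  proof -
    have "(\<Sum>n<N. x (sg n) - x n) = (\<Sum>n<N. (h n - h (Suc n)))
        + (\<Sum>n<N. (if n \<in> DT then x (t (card (DT \<inter> {..<n}))) else 0))
        - (\<Sum>n<N. (if n \<in> range t then x (t (card (range t \<inter> {..<n}))) else 0))"
      by (simp add: step_id sum.distrib sum_subtractf)
    also have "\<dots> = (h 0 - h N) + A N - B N"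
      unfolding A_def B_def sum_lessThan_telescope'[of "\<lambda>n. h n" N] sum_rank[of DT "\<lambda>k. x (t k)"]
        sum_rank[of "range t" "\<lambda>k. x (t k)"] by (simp del: Hs.simps)
    finally show ?thesis by (simp add: sum_subtractf)
  qed
  have inft: "infinite (range t)"
    using strict_mono_imp_inj_on[OF tmono] by (simp add: range_inj_infinite)
  have lA: "A \<longlonglongrightarrow> suminf (\<lambda>k. x (t k))"
    unfolding A_def by (rule filterlim_compose[OF summable_LIMSEQ[OF tsum] rank_tendsto[OF DT_inf]])
  have lB: "B \<longlonglongrightarrow> suminf (\<lambda>k. x (t k))"
    unfolding B_def by (rule filterlim_compose[OF summable_LIMSEQ[OF tsum] rank_tendsto[OF inft]])
  have "(\<lambda>N. (\<Sum>n<N. x n) - h N + A N - B N) \<longlonglongrightarrow>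
      suminf x - c + suminf (\<lambda>k. x (t k)) - suminf (\<lambda>k. x (t k))"
    by (intro tendsto_intros summable_LIMSEQ[OF xs] D3 lA lB)
  then show ?thesis unfolding sums_def eq by simp
qed

lemma core: "\<exists>\<sigma>. bij \<sigma> \<and> supp \<sigma> \<subseteq> P \<and> (\<lambda>n. x (\<sigma> n)) sums (suminf x - c)"
  using sg_bij sg_supp sg_sums by blast

end



primrec pick :: "(nat \<Rightarrow> nat \<Rightarrow> nat) \<Rightarrow> nat \<Rightarrow> nat" where
  "pick g 0 = g 0 0"
| "pick g (Suc k) = g (pick g k) (Suc k)"

lemma shift_down:
  fixes x :: "nat \<Rightarrow> real"
  assumes xs: "summable x" and Ppos: "\<And>n. n \<in> P \<Longrightarrow> x n > 0" and Pns: "\<not> x summable_on P"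
    and c: "c > 0"
  shows "\<exists>\<sigma>. bij \<sigma> \<and> supp \<sigma> \<subseteq> P \<and> (\<lambda>n. x (\<sigma> n)) sums (suminf x - c)"
proof -
  have xlim: "x \<longlonglongrightarrow> 0" using summable_LIMSEQ_zero[OF xs] .
  have Pinf: "infinite P" using Pns summable_on_finite by blast
  have ex: "\<exists>n. n \<in> P \<and> n > m \<and> x n \<le> (1/2)^k" for m k
  proof -
    have "(0::real) < (1/2)^k" by simp
    from LIMSEQ_D[OF xlim this] obtain N where N: "\<And>n. n \<ge> N \<Longrightarrow> norm (x n - 0) < (1/2)^k" by blast
    obtain n where n: "n \<in> P" "n > max m N"
      using Pinf infinite_nat_iff_unbounded by blast
    then show ?thesis using N[of n] by auto
  qed
  define nxt where "nxt m k = (SOME n. n \<in> P \<and> n > m \<and> x n \<le> (1/2)^k)" for m k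
  have nxt: "nxt m k \<in> P \<and> nxt m k > m \<and> x (nxt m k) \<le> (1/2)^k" for m k
    unfolding nxt_def by (rule someI_ex[OF ex])
  define t where "t = pick nxt"
  have tk: "\<exists>m. t k = nxt m k" for k
    by (cases k) (auto simp: t_def)
  have tP: "t k \<in> P" and tx: "x (t k) \<le> (1/2)^k" for k
    using tk[of k] nxt by metis+
  have tmono: "strict_mono t"
    unfolding strict_mono_Suc_iff
  proof
    fix k
    have "t (Suc k) = nxt (t k) (Suc k)" by (simp add: t_def)
    then show "t k < t (Suc k)" using nxt[of "t k" "Suc k"] by simp
  qed
  have tsum: "summable (\<lambda>k. x (t k))"
  proof (rule summable_comparison_test[OF _ summable_geometric[of "1/2::real"]])
    show "\<exists>N. \<forall>n\<ge>N. norm (x (t n)) \<le> (1/2)^n"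
      using tx tP Ppos by (auto intro!: exI[of _ 0] simp: less_imp_le)
  qed simp
  have Pdiv: "\<not> x summable_on (P - range t)"
  proof
    assume a: "x summable_on (P - range t)"
    have "(\<lambda>k. x (t k)) summable_on UNIV"
      using tsum tP Ppos summable_on_UNIV_nonneg_real_iff by (meson less_imp_le)
    then have "x summable_on range t"
      using summable_on_reindex[of t UNIV x] strict_mono_imp_inj_on[OF tmono] by (simp add: o_def)
    then have "x summable_on ((P - range t) \<union> range t)"
      using a summable_on_Un_disjoint by blast
    moreover have "(P - range t) \<union> range t = P" using tP by auto
    ultimately show False using Pns by simp
  qed
  show ?thesis
    using core[OF xlim Ppos Pdiv tmono _ c xs tsum] tP by blast
qed


lemma down_all:
  fixes x :: "nat \<Rightarrow> real"
  assumes xs: "summable x" and Ppos: "\<And>n. n \<in> P \<Longrightarrow> x n > 0" and Pns: "\<not> x summable_on P"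
    and r: "r \<le> suminf x"
  shows "\<exists>\<sigma>. bij \<sigma> \<and> supp \<sigma> \<subseteq> P \<and> (\<lambda>n. x (\<sigma> n)) sums r"
proof (cases "r = suminf x")
  case True
  have "bij (\<lambda>n. n)" by (simp add: bij_def)
  moreover have "supp (\<lambda>n. n) = {}" by (simp add: supp_def)
  ultimately show ?thesis using True summable_sums[OF xs] by (intro exI[of _ "\<lambda>n. n"]) auto
next
  case False
  then have "suminf x - r > 0" using r by simp
  from shift_down[OF xs Ppos Pns this] show ?thesis by simp
qed

lemma bij_supp:
  assumes "bij \<sigma>"
  shows "bij_betw \<sigma> (supp \<sigma>) (supp \<sigma>)"
proof -
  have inj: "inj \<sigma>" using assms bij_is_inj by blast
  have "\<sigma> n \<in> supp \<sigma>" if "n \<in> supp \<sigma>" for n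
  proof -
    have "\<sigma> (\<sigma> n) \<noteq> \<sigma> n"
    proof
      assume "\<sigma> (\<sigma> n) = \<sigma> n"
      then have "\<sigma> n = n" using injD[OF inj] by blast
      then show False using that by (simp add: supp_def)
    qed
    then show ?thesis by (simp add: supp_def)
  qed
  moreover have "m \<in> \<sigma> ` supp \<sigma>" if "m \<in> supp \<sigma>" for m
  proof -
    obtain n where n: "m = \<sigma> n" using assms bij_is_surj by (metis surj_def)
    have "n \<in> supp \<sigma>"
    proof (rule ccontr)
      assume "n \<notin> supp \<sigma>"
      then have "\<sigma> n = n" by (simp add: supp_def)
      then show False using that n by (simp add: supp_def)
    qed
    then show ?thesis using n by blast
  qed
  ultimately show ?thesis
    unfolding bij_betw_def using inj_on_subset[OF inj] by blast
qed

lemma abs_sum_unchanged: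
  fixes x :: "nat \<Rightarrow> real"
  assumes xs: "summable x" and b: "bij \<sigma>" and ab: "(\<lambda>n. \<bar>x n\<bar>) summable_on supp \<sigma>"
  shows "(\<lambda>n. x (\<sigma> n)) sums suminf x"
proof -
  define S where "S = supp \<sigma>"
  have "x summable_on S"
    using ab summable_on_iff_abs_summable_on_real[of x S] by (simp add: S_def)
  then have hs: "(x has_sum infsum x S) S" by simp
  have bb: "bij_betw \<sigma> S S" using bij_supp[OF b] by (simp add: S_def)
  have hs2: "((\<lambda>n. x (\<sigma> n)) has_sum infsum x S) S"
    using has_sum_reindex_bij_betw[OF bb, of x] hs by simp
  define g1 where "g1 n = (if n \<in> S then x (\<sigma> n) else 0)" for n
  define g2 where "g2 n = (if n \<in> S then x n else 0)" for n
  have "(g1 has_sum infsum x S) UNIV"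
    using hs2 by (subst has_sum_cong_neutral[where T = S]) (auto simp: g1_def)
  then have s1: "g1 sums infsum x S" by (rule has_sum_imp_sums)
  have "(g2 has_sum infsum x S) UNIV"
    using hs by (subst has_sum_cong_neutral[where T = S]) (auto simp: g2_def)
  then have s2: "g2 sums infsum x S" by (rule has_sum_imp_sums)
  have eq: "x (\<sigma> n) = x n + g1 n - g2 n" for n
    by (cases "n \<in> S") (auto simp: g1_def g2_def S_def supp_def)
  have "(\<lambda>n. x n + g1 n - g2 n) sums (suminf x + infsum x S - infsum x S)"
    by (intro sums_diff sums_add summable_sums[OF xs] s1 s2)
  then show ?thesis using eq by simp
qed

theorem mainTheorem8:
  fixes x :: "nat \<Rightarrow> real" and I :: "nat set set"
  assumes cc: "conditionally_convergent x"
    and ideal: "ideal_on_nat I"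
    and fin: "\<And>A. finite A \<Longrightarrow> A \<in> I"
  defines "H1 \<equiv> (\<forall>A\<in>I. (\<lambda>n. \<bar>x n\<bar>) summable_on A)"
    and "H2 \<equiv> (\<exists>A\<in>I. \<not> (\<lambda>n. pos_part (x n)) summable_on A \<and> \<not> (\<lambda>n. neg_part (x n)) summable_on A)"
    and "H3 \<equiv> ((\<exists>A\<in>I. \<not> (\<lambda>n. pos_part (x n)) summable_on A) \<and>
              (\<forall>A\<in>I. \<not> (\<lambda>n. pos_part (x n)) summable_on A \<longrightarrow> (\<lambda>n. neg_part (x n)) summable_on A))"
    and "H4 \<equiv> ((\<exists>B\<in>I. \<not> (\<lambda>n. neg_part (x n)) summable_on B) \<and>
              (\<forall>B\<in>I. \<not> (\<lambda>n. neg_part (x n)) summable_on B \<longrightarrow> (\<lambda>n. pos_part (x n)) summable_on B))"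
  shows "(SR I x = {suminf x} \<longleftrightarrow> H1)
    \<and> (H2 \<longrightarrow> SR I x = UNIV)
    \<and> (H3 \<longrightarrow> {..suminf x} \<subseteq> SR I x)
    \<and> (H4 \<longrightarrow> {suminf x..} \<subseteq> SR I x)
    \<and> (H1 \<or> H2 \<or> H3 \<or> H4)
    \<and> \<not> (H1 \<and> H2) \<and> \<not> (H1 \<and> H3) \<and> \<not> (H1 \<and> H4)
    \<and> \<not> (H2 \<and> H3) \<and> \<not> (H2 \<and> H4) \<and> \<not> (H3 \<and> H4)"
proof -
  let ?s = "suminf x"
  have xs: "summable x" using cc by (simp add: conditionally_convergent_def)
  have sub: "\<And>A B. A \<in> I \<Longrightarrow> B \<subseteq> A \<Longrightarrow> B \<in> I" using ideal unfolding ideal_on_nat_def by blast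
  have un: "\<And>A B. A \<in> I \<Longrightarrow> B \<in> I \<Longrightarrow> A \<union> B \<in> I" using ideal unfolding ideal_on_nat_def by blast
  have SRI: "\<And>\<sigma> r. bij \<sigma> \<Longrightarrow> supp \<sigma> \<in> I \<Longrightarrow> (\<lambda>n. x (\<sigma> n)) sums r \<Longrightarrow> r \<in> SR I x"
    by (auto simp: SR_def)
  have pf: "pos_part (x n) \<ge> 0" "neg_part (x n) \<ge> 0" "pos_part (x n) \<le> \<bar>x n\<bar>" "neg_part (x n) \<le> \<bar>x n\<bar>"
    "\<bar>x n\<bar> = pos_part (x n) + neg_part (x n)" for n
    by (auto simp: pos_part_def neg_part_def)
  have down: "{..?s} \<subseteq> SR I x" if A: "A \<in> I" "\<not> (\<lambda>n. pos_part (x n)) summable_on A" for A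
  proof
    fix r assume "r \<in> {..?s}" then have r: "r \<le> ?s" by simp
    define P where "P = A \<inter> {n. x n > 0}"
    have "\<not> x summable_on P"
    proof
      assume "x summable_on P"
      then have "(\<lambda>n. pos_part (x n)) summable_on A"
        by (subst summable_on_cong_neutral[where T = P and g = x]) (auto simp: P_def pos_part_def)
      then show False using A(2) by simp
    qed
    from down_all[OF xs _ this r] obtain \<sigma> where s: "bij \<sigma>" "supp \<sigma> \<subseteq> P" "(\<lambda>n. x (\<sigma> n)) sums r"
      by (auto simp: P_def)
    have "supp \<sigma> \<in> I" using sub[OF A(1)] s(2) by (auto simp: P_def)
    then show "r \<in> SR I x" using SRI s by blast
  qed
  have up: "{?s..} \<subseteq> SR I x" if A: "A \<in> I" "\<not> (\<lambda>n. neg_part (x n)) summable_on A" for A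
  proof
    fix r assume "r \<in> {?s..}" then have r: "-r \<le> suminf (\<lambda>n. - x n)" using suminf_minus[OF xs] by simp
    define P where "P = A \<inter> {n. x n < 0}"
    have "\<not> (\<lambda>n. - x n) summable_on P"
    proof
      assume "(\<lambda>n. - x n) summable_on P"
      then have "(\<lambda>n. neg_part (x n)) summable_on A"
        by (subst summable_on_cong_neutral[where T = P and g = "\<lambda>n. - x n"]) (auto simp: P_def neg_part_def)
      then show False using A(2) by simp
    qed
    from down_all[OF summable_minus[OF xs] _ this r] obtain \<sigma>
      where s: "bij \<sigma>" "supp \<sigma> \<subseteq> P" "(\<lambda>n. - x (\<sigma> n)) sums (-r)"
      by (auto simp: P_def)
    have s3: "(\<lambda>n. x (\<sigma> n)) sums r" using sums_minus[OF s(3)] by simp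
    have "supp \<sigma> \<in> I" using sub[OF A(1)] s(2) by (auto simp: P_def)
    then show "r \<in> SR I x" using SRI s(1) s3 by blast
  qed
  have ppos: "(\<lambda>n. pos_part (x n)) summable_on A" if "(\<lambda>n. \<bar>x n\<bar>) summable_on A" for A
    by (rule summable_on_comparison_test[OF that]) (use pf in auto)
  have pneg: "(\<lambda>n. neg_part (x n)) summable_on A" if "(\<lambda>n. \<bar>x n\<bar>) summable_on A" for A
    by (rule summable_on_comparison_test[OF that]) (use pf in auto)
  have pabs: "(\<lambda>n. \<bar>x n\<bar>) summable_on A" if "(\<lambda>n. pos_part (x n)) summable_on A"
     "(\<lambda>n. neg_part (x n)) summable_on A" for A
  proof -
    have "(\<lambda>n. pos_part (x n) + neg_part (x n)) summable_on A" using summable_on_add[OF that] .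
    then show ?thesis using pf(5) by simp
  qed
  have ssub: "f summable_on B" if "f summable_on A" "B \<subseteq> A" for f :: "nat \<Rightarrow> real" and A B
    using summable_on_subset_banach that by blast
  have idI: "?s \<in> SR I x"
  proof -
    have "bij (\<lambda>n. n)" by (simp add: bij_def)
    moreover have "supp (\<lambda>n. n) \<in> I" using fin[of "{}"] by (simp add: supp_def)
    ultimately show ?thesis using SRI summable_sums[OF xs] by auto
  qed
  have one: "SR I x = {?s}" if H1 
  proof
    show "SR I x \<subseteq> {?s}"
    proof
      fix r assume "r \<in> SR I x"
      then obtain \<sigma> where s: "bij \<sigma>" "supp \<sigma> \<in> I" "(\<lambda>n. x (\<sigma> n)) sums r" by (auto simp: SR_def)
      have "(\<lambda>n. \<bar>x n\<bar>) summable_on supp \<sigma>" using that s(2) by (simp add: H1_def)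
      then have "(\<lambda>n. x (\<sigma> n)) sums ?s" using abs_sum_unchanged[OF xs s(1)] by simp
      then show "r \<in> {?s}" using s(3) sums_unique2 by auto
    qed
  qed (use idI in simp)
  have exh: "H1 \<or> H2 \<or> H3 \<or> H4"
  proof (rule ccontr)
    assume n: "\<not> (H1 \<or> H2 \<or> H3 \<or> H4)"
    then obtain A where A: "A \<in> I" "\<not> (\<lambda>n. \<bar>x n\<bar>) summable_on A" by (auto simp: H1_def)
    then have "\<not> (\<lambda>n. pos_part (x n)) summable_on A \<or> \<not> (\<lambda>n. neg_part (x n)) summable_on A"
      using pabs by blast
    then show False using n A(1) unfolding H2_def H3_def H4_def by blast
  qed
  have ne: "SR I x \<noteq> {?s}" if "H2 \<or> H3 \<or> H4"
  proof -
    have "{..?s} \<subseteq> SR I x \<or> {?s..} \<subseteq> SR I x"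
      using that down up unfolding H2_def H3_def H4_def by blast
    moreover have "?s - 1 \<in> {..?s}" "?s + 1 \<in> {?s..}" by auto
    ultimately have "?s - 1 \<in> SR I x \<or> ?s + 1 \<in> SR I x" by blast
    then show ?thesis by auto
  qed
  have c2: "H2 \<longrightarrow> SR I x = UNIV"
  proof
    assume H2
    then obtain A where "A \<in> I" "\<not> (\<lambda>n. pos_part (x n)) summable_on A" "\<not> (\<lambda>n. neg_part (x n)) summable_on A"
      by (auto simp: H2_def)
    then have "{..?s} \<union> {?s..} \<subseteq> SR I x" using down up by blast
    moreover have "{..?s} \<union> {?s..} = UNIV" by auto
    ultimately show "SR I x = UNIV" by auto
  qed
  have c3: "H3 \<longrightarrow> {..?s} \<subseteq> SR I x" using down unfolding H3_def by blast
  have c4: "H4 \<longrightarrow> {?s..} \<subseteq> SR I x" using up unfolding H4_def by blast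
  have x12: "\<not> (H1 \<and> H2)" unfolding H1_def H2_def using ppos by blast
  have x13: "\<not> (H1 \<and> H3)" unfolding H1_def H3_def using ppos by blast
  have x14: "\<not> (H1 \<and> H4)" unfolding H1_def H4_def using pneg by blast
  have x23: "\<not> (H2 \<and> H3)" unfolding H2_def H3_def by blast
  have x24: "\<not> (H2 \<and> H4)" unfolding H2_def H4_def by blast
  have x34: "\<not> (H3 \<and> H4)"
  proof
    assume "H3 \<and> H4"
    then obtain A B where A: "A \<in> I" "\<not> (\<lambda>n. pos_part (x n)) summable_on A"
      and B: "B \<in> I" "\<not> (\<lambda>n. neg_part (x n)) summable_on B"
      and h3: "\<forall>A\<in>I. \<not> (\<lambda>n. pos_part (x n)) summable_on A \<longrightarrow> (\<lambda>n. neg_part (x n)) summable_on A"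
      unfolding H3_def H4_def by blast
    have "\<not> (\<lambda>n. pos_part (x n)) summable_on (A \<union> B)" using A(2) ssub[of _ "A \<union> B" A] by blast
    then have "(\<lambda>n. neg_part (x n)) summable_on (A \<union> B)" using h3 un[OF A(1) B(1)] by blast
    then show False using B(2) ssub[of _ "A \<union> B" B] by blast
  qed
  have c1: "SR I x = {?s} \<longleftrightarrow> H1" using one ne exh by blast
  show ?thesis using c1 c2 c3 c4 exh x12 x13 x14 x23 x24 x34 by blast
qed

end
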